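(* Let $\widehat{\mathcal{G}}$ be a simple directed graph on $N$ vertices with adjacency matrix $A=A(\widehat{\mathcal{G}})\in\mathbb{R}^{N\times N}$, where $A_{ij}=1$ if there is an edge from $j$ to $i$ and $A_{ij}=0$ otherwise, and with vertices ordered so that the zero columns of $A$ (corresponding to the sinks) are the last columns. Let $\Pi_0=\{\mathcal{T}^{(0)}_1,\dots,\mathcal{T}^{(0)}_{|\Pi_0|}\}$, $|\Pi_0|=N-|\mathcal{S}_{\mathrm{in}}(\widehat{\mathcal{G}})|$, where $\mathcal{T}^{(0)}_k$ is the pseudotree consisting of vertex $k$, all out-neighbors of $k$, and all edges from $k$ to its out-neighbors. For $i,j\in\{1,\dots,|\Pi_0|\}$ let $$a_{ij}=\big([A+I\mathfrak{i}]_{\star i}\big)^\top[A+I\mathfrak{i}]_{\star j},$$ where $\mathfrak{i}$ is the imaginary unit and $[\,\cdot\,]_{\star i}$ denotes the $i$-th column (plain transpose, no conjugation). Then the characteristic matrix $\mathscr{M}^{(0)}$ of $\Pi_0$ satisfies $\mathscr{M}^{(0)}_{ii}=0$ for all $i$, and for $j\ne i$: $\mathscr{M}^{(0)}_{ij}=1$ if $\operatorname{Re}(a_{ij})=0$, $\operatorname{Im}(a_{ij})\ne0$ and $A_{ij}\ne0$; $\mathscr{M}^{(0)}_{ij}=0$ if $\operatorname{Re}(a_{ij})\ne0$, or if ($\operatorname{Re}(a_{ij})=0$, $\operatorname{Im}(a_{ij})\ne0$ and $A_{ij}=0$); $\mathscr{M}^{(0)}_{ij}=\varnothing$ if $a_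{ij}=0$.
   Context: $\mathcal{S}_{\mathrm{in}}(\widehat{\mathcal{G}})$ is the set of sinks (vertices with no out-neighbors). A pseudotree is a connected (underlying undirected graph connected) simple directed graph $\mathcal{T}$ with $|V(\mathcal{T})|\ge2$ in which every vertex has at most one in-neighbor in $\mathcal{T}$; a root of $\mathcal{T}$ is a vertex from which there is exactly one directed path to every other vertex of $\mathcal{T}$, and $\Upsilon(\mathcal{T})$ is the set of roots. Two pseudotree subgraphs $\mathcal{T}_1,\mathcal{T}_2$ are disjoint if $E(\mathcal{T}_1)\cap E(\mathcal{T}_2)=\emptyset$ and for every vertex $j\in V(\mathcal{T}_1)\cup V(\mathcal{T}_2)$ the edges of $E(\mathcal{T}_1)\cup E(\mathcal{T}_2)$ leaving $j$ all lie in one of $E(\mathcal{T}_1)$, $E(\mathcal{T}_2)$. Mergeability: for two disjoint pseudotrees $\mathcal{T}_1,\mathcal{T}_2$ with $V(\mathcal{T}_1)\cap V(\mathcal{T}_2)\ne\emptyset$, $\mathcal{T}_1$ is mergeable to $\mathcal{T}_2$ if the union graph $(V(\mathcal{T}_1)\cup V(\mathcal{T}_2),E(\mathcal{T}_1)\cup E(\mathcal{T}_2))$ is a pseudotree and there is a directed path from every vertex of $\Upsilon(\mathcal{T}_2)$ to every vertex of $V(\mathcal{T}_1)$. Characteristic matrix: for a disjoint pseudotree covering $\Pi=\{\mathcal{T}_1,\dots,\mathcal{T}_n\}$ of a directed graph, its characteristic matrix $\mathscr{M}\in\{1,0,\varnothing\}^{n\times n}$ has $\mathscr{M}_{ij}=1$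 if $\mathcal{T}_i$ is mergeable to $\mathcal{T}_j$, $\mathscr{M}_{ij}=\varnothing$ (a formal symbol) if $V(\mathcal{T}_j)\cap V(\mathcal{T}_i)=\emptyset$, and $\mathscr{M}_{ij}=0$ otherwise. *)

theory Defs
  imports Complex_Main
begin

text \<open>Directed graphs on vertices of type nat: a graph is a pair (V, E) of a vertex set
  and an edge set, where (u, v) \<in> E means an edge from u to v.\<close>

type_synonym dgraph = "nat set \<times> (nat \<times> nat) set"

definition simple_dgraph :: "dgraph \<Rightarrow> bool" where
  "simple_dgraph G \<longleftrightarrow> finite (fst G) \<and> snd G \<subseteq> fst G \<times> fst G \<and> (\<forall>v. (v, v) \<notin> snd G)"

definition weakly_connected :: "dgraph \<Rightarrow> bool" where
  "weakly_connected G \<longleftrightarrow> (\<forall>u\<in>fst G. \<forall>v\<in>fst G. (u, v) \<in> (snd G \<union> (snd G)\<inverse>)\<^sup>*)"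

definition dpath :: "(nat \<times> nat) set \<Rightarrow> nat list \<Rightarrow> bool" where
  "dpath E xs \<longleftrightarrow> xs \<noteq> [] \<and> distinct xs \<and> (\<forall>i. Suc i < length xs \<longrightarrow> (xs ! i, xs ! Suc i) \<in> E)"

definition pseudotree :: "dgraph \<Rightarrow> bool" where
  "pseudotree T \<longleftrightarrow> simple_dgraph T \<and> weakly_connected T \<and> card (fst T) \<ge> 2 \<and>
     (\<forall>v\<in>fst T. card {u. (u, v) \<in> snd T} \<le> 1)"

definition roots :: "dgraph \<Rightarrow> nat set" where
  "roots T = {r \<in> fst T. \<forall>v\<in>fst T. v \<noteq> r \<longrightarrow>
      (\<exists>!xs. dpath (snd T) xs \<and> hd xs = r \<and> last xs = v)}"

definition disjoint_pt :: "dgraph \<Rightarrow> dgraph \<Rightarrow> bool" where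
  "disjoint_pt T1 T2 \<longleftrightarrow> snd T1 \<inter> snd T2 = {} \<and>
     (\<forall>j \<in> fst T1 \<union> fst T2.
        {e \<in> snd T1 \<union> snd T2. fst e = j} \<subseteq> snd T1 \<or>
        {e \<in> snd T1 \<union> snd T2. fst e = j} \<subseteq> snd T2)"

definition graph_union :: "dgraph \<Rightarrow> dgraph \<Rightarrow> dgraph" where
  "graph_union T1 T2 = (fst T1 \<union> fst T2, snd T1 \<union> snd T2)"

definition mergeable :: "dgraph \<Rightarrow> dgraph \<Rightarrow> bool" where
  "mergeable T1 T2 \<longleftrightarrow> pseudotree T1 \<and> pseudotree T2 \<and> disjoint_pt T1 T2 \<and>
     fst T1 \<inter> fst T2 \<noteq> {} \<and> pseudotree (graph_union T1 T2) \<and>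
     (\<forall>r\<in>roots T2. \<forall>v\<in>fst T1.
        \<exists>xs. dpath (snd (graph_union T1 T2)) xs \<and> hd xs = r \<and> last xs = v)"

datatype cm_entry = CM_One | CM_Zero | CM_Empty

definition char_entry :: "dgraph \<Rightarrow> dgraph \<Rightarrow> cm_entry" where
  "char_entry Ti Tj = (if mergeable Ti Tj then CM_One
      else if fst Tj \<inter> fst Ti = {} then CM_Empty else CM_Zero)"

text \<open>Graph on vertices 0..N-1 (0-indexed) given by an edge set E.\<close>
definition adj :: "(nat \<times> nat) set \<Rightarrow> nat \<Rightarrow> nat \<Rightarrow> real" where
  "adj E i j = (if (j, i) \<in> E then 1 else 0)"

definition sinks :: "nat \<Rightarrow> (nat \<times> nat) set \<Rightarrow> nat set" where
  "sinks N E = {v. v < N \<and> (\<forall>u. (v, u) \<notin> E)}"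

definition star_pt :: "(nat \<times> nat) set \<Rightarrow> nat \<Rightarrow> dgraph" where
  "star_pt E k = ({k} \<union> {v. (k, v) \<in> E}, {(k, v) | v. (k, v) \<in> E})"

definition aval :: "nat \<Rightarrow> (nat \<times> nat) set \<Rightarrow> nat \<Rightarrow> nat \<Rightarrow> complex" where
  "aval N E i j = (\<Sum>k<N. (complex_of_real (adj E k i) + (if k = i then \<i> else 0)) *
                          (complex_of_real (adj E k j) + (if k = j then \<i> else 0)))"

end

theory Submission
  imports Defs
begin

lemma star_fst: "fst (star_pt E k) = {k} \<union> {v. (k, v) \<in> E}"
  by (simp add: star_pt_def)

lemma star_snd_mem: "(a, b) \<in> snd (star_pt E k) \<longleftrightarrow> a = k \<and> (k, b) \<in> E"
  by (auto simp: star_pt_def)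

lemma wc_center:
  assumes "\<forall>v\<in>fst G. (c, v) \<in> (snd G \<union> (snd G)\<inverse>)\<^sup>*"
  shows "weakly_connected G"
  unfolding weakly_connected_def
proof (intro ballI)
  fix u v assume u: "u \<in> fst G" and v: "v \<in> fst G"
  let ?R = "snd G \<union> (snd G)\<inverse>"
  have s: "?R\<inverse> = ?R" by auto
  have "(c, u) \<in> ?R\<^sup>*" using assms u by blast
  then have "(u, c) \<in> (?R\<inverse>)\<^sup>*" by (simp add: rtrancl_converseI)
  then have "(u, c) \<in> ?R\<^sup>*" using s by simp
  moreover have "(c, v) \<in> ?R\<^sup>*" using assms v by blast
  ultimately show "(u, v) \<in> ?R\<^sup>*" by (rule rtrancl_trans)
qed

lemma dpath_rtrancl: "dpath E xs \<Longrightarrow> (hd xs, last xs) \<in> E\<^sup>*"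
proof (induction xs)
  case Nil then show ?case by (simp add: dpath_def)
next
  case (Cons x xs)
  show ?case
  proof (cases xs)
    case Nil then show ?thesis by simp
  next
    case (Cons y ys)
    have "\<forall>i. Suc i < length xs \<longrightarrow> (xs ! i, xs ! Suc i) \<in> E"
    proof (intro allI impI)
      fix i assume "Suc i < length xs"
      then have "Suc (Suc i) < length (x # xs)" by simp
      with Cons.prems have "((x # xs) ! Suc i, (x # xs) ! Suc (Suc i)) \<in> E"
        unfolding dpath_def by blast
      then show "(xs ! i, xs ! Suc i) \<in> E" by simp
    qed
    then have "dpath E xs" using Cons.prems Cons unfolding dpath_def by simp
    then have "(hd xs, last xs) \<in> E\<^sup>*" by (rule Cons.IH)
    moreover have "(x, y) \<in> E" using Cons.prems Cons unfolding dpath_def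
      by (metis Suc_less_eq length_Cons nth_Cons_0 nth_Cons_Suc zero_less_Suc)
    ultimately show ?thesis using Cons
      by (simp add: converse_rtrancl_into_rtrancl)
  qed
qed

lemma dpath1: "dpath E [a]"
  by (simp add: dpath_def)

lemma dpath2: "a \<noteq> b \<Longrightarrow> (a, b) \<in> E \<Longrightarrow> dpath E [a, b]"
  by (simp add: dpath_def)

lemma dpath3: "distinct [a, b, c] \<Longrightarrow> (a, b) \<in> E \<Longrightarrow> (b, c) \<in> E \<Longrightarrow> dpath E [a, b, c]"
  unfolding dpath_def
  by (auto simp: less_Suc_eq nth_Cons split: nat.splits)

lemma star_pseudotree:
  assumes simple: "simple_dgraph ({0..<N}, E)" and k: "k < N" and ku: "(k, u) \<in> E"
  shows "pseudotree (star_pt E k)"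
proof -
  have EN: "\<And>a b. (a, b) \<in> E \<Longrightarrow> a < N \<and> b < N \<and> a \<noteq> b"
    using simple unfolding simple_dgraph_def by auto
  have fin: "finite (fst (star_pt E k))"
    by (rule finite_subset[of _ "{0..<N}"]) (auto simp: star_fst k dest: EN)
  have "simple_dgraph (star_pt E k)"
    unfolding simple_dgraph_def using fin
    by (auto simp: star_fst star_snd_mem dest: EN)
  moreover have "weakly_connected (star_pt E k)"
    by (rule wc_center[where c = k]) (auto simp: star_fst star_snd_mem)
  moreover have "card (fst (star_pt E k)) \<ge> 2"
  proof -
    have "{k, u} \<subseteq> fst (star_pt E k)" using ku by (auto simp: star_fst)
    moreover have "card {k, u} = 2" using EN[OF ku] by auto
    ultimately show ?thesis using card_mono[OF fin] by metis
  qed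
  moreover have "\<forall>v\<in>fst (star_pt E k). card {u. (u, v) \<in> snd (star_pt E k)} \<le> 1"
  proof
    fix v
    have "{u. (u, v) \<in> snd (star_pt E k)} \<subseteq> {k}" by (auto simp: star_snd_mem)
    then show "card {u. (u, v) \<in> snd (star_pt E k)} \<le> 1"
      by (metis card.empty card.insert empty_iff finite.intros(1) le_zero_eq
            One_nat_def card_mono finite.emptyI finite_insert)
  qed
  ultimately show ?thesis unfolding pseudotree_def by blast
qed

lemma roots_star_sub: "roots (star_pt E k) \<subseteq> {k}"
proof
  fix r assume r: "r \<in> roots (star_pt E k)"
  show "r \<in> {k}"
  proof (rule ccontr)
    assume "r \<notin> {k}"
    then have rk: "r \<noteq> k" by simp
    have "k \<in> fst (star_pt E k)" by (simp add: star_fst)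
    moreover from r have "\<forall>v\<in>fst (star_pt E k). v \<noteq> r \<longrightarrow>
      (\<exists>!xs. dpath (snd (star_pt E k)) xs \<and> hd xs = r \<and> last xs = v)"
      unfolding roots_def by simp
    ultimately have "\<exists>!xs. dpath (snd (star_pt E k)) xs \<and> hd xs = r \<and> last xs = k"
      using rk by (metis (no_types, lifting))
    then have "\<exists>xs. dpath (snd (star_pt E k)) xs \<and> hd xs = r \<and> last xs = k"
      by (rule ex1_implies_ex)
    then obtain xs where xs: "dpath (snd (star_pt E k)) xs" "hd xs = r" "last xs = k"
      by blast
    show False
    proof (cases xs)
      case Nil then show ?thesis using xs by (simp add: dpath_def)
    next
      case (Cons a ys)
      show ?thesis
      proof (cases ys)
        case Nil then show ?thesis using xs Cons rk by simp
      next
        case (Cons b zs)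
        have D: "\<forall>i. Suc i < length xs \<longrightarrow> (xs ! i, xs ! Suc i) \<in> snd (star_pt E k)"
          using xs(1) by (simp add: dpath_def)
        have "Suc 0 < length xs" using Cons \<open>xs = a # ys\<close> by simp
        then have "(xs ! 0, xs ! Suc 0) \<in> snd (star_pt E k)" using D by blast
        then show ?thesis using xs(2) Cons \<open>xs = a # ys\<close> rk by (simp add: star_snd_mem)
      qed
    qed
  qed
qed

lemma root_star:
  assumes noloop: "\<forall>v. (v, v) \<notin> E"
  shows "k \<in> roots (star_pt E k)"
proof -
  have "\<exists>!xs. dpath (snd (star_pt E k)) xs \<and> hd xs = k \<and> last xs = v"
    if kv: "(k, v) \<in> E" and vk: "v \<noteq> k" for v
  proof -
  show "\<exists>!xs. dpath (snd (star_pt E k)) xs \<and> hd xs = k \<and> last xs = v"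
  proof (rule ex1I[where a = "[k, v]"])
    show "dpath (snd (star_pt E k)) [k, v] \<and> hd [k, v] = k \<and> last [k, v] = v"
      using kv vk by (auto intro!: dpath2 simp: star_snd_mem)
  next
    fix xs assume H: "dpath (snd (star_pt E k)) xs \<and> hd xs = k \<and> last xs = v"
    show "xs = [k, v]"
    proof (cases xs)
      case Nil then show ?thesis using H by (simp add: dpath_def)
    next
      case (Cons a ys)
      show ?thesis
      proof (cases ys)
        case Nil then show ?thesis using H Cons vk by simp
      next
        case (Cons b zs)
        show ?thesis
        proof (cases zs)
          case Nil then show ?thesis using H Cons \<open>xs = a # ys\<close> by simp
        next
          case (Cons c ws)
          have D: "\<forall>i. Suc i < length xs \<longrightarrow> (xs ! i, xs ! Suc i) \<in> snd (star_pt E k)"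
            using H by (simp add: dpath_def)
          have "Suc 1 < length xs" using Cons \<open>xs = a # ys\<close> \<open>ys = b # zs\<close> by simp
          then have "(xs ! 1, xs ! Suc 1) \<in> snd (star_pt E k)" using D by blast
          then have "b = k" using Cons \<open>xs = a # ys\<close> \<open>ys = b # zs\<close> by (simp add: star_snd_mem)
          moreover have "distinct xs" using H by (simp add: dpath_def)
          ultimately show ?thesis using H \<open>xs = a # ys\<close> \<open>ys = b # zs\<close> by simp
        qed
      qed
    qed
  qed
  qed
  then show ?thesis unfolding roots_def by (auto simp: star_fst)
qed

lemma aval_Re: "i \<noteq> j \<Longrightarrow> Re (aval N E i j) = (\<Sum>k<N. adj E k i * adj E k j)"
  unfolding aval_def Re_sum by (rule sum.cong) auto

lemma aval_Im: "i \<noteq> j \<Longrightarrow> i < N \<Longrightarrow> j < N \<Longrightarrow> Im (aval N E i j) = adj E j i + adj E i j"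
proof -
  assume ij: "i \<noteq> j" "i < N" "j < N"
  have "Im (aval N E i j) = (\<Sum>k<N. (if k = j then adj E k i else 0) + (if k = i then adj E k j else 0))"
    unfolding aval_def Im_sum by (rule sum.cong) (auto simp: ij)
  also have "\<dots> = adj E j i + adj E i j"
    using ij by (simp add: sum.distrib)
  finally show ?thesis .
qed

theorem lemma5:
  fixes N :: nat and E :: "(nat \<times> nat) set"
  assumes simple: "simple_dgraph ({0..<N}, E)"
    and sinks_last: "\<forall>v<N. (v \<in> sinks N E \<longleftrightarrow> N - card (sinks N E) \<le> v)"
  shows "(\<forall>i < N - card (sinks N E). char_entry (star_pt E i) (star_pt E i) = CM_Zero) \<and>
         (\<forall>i < N - card (sinks N E). \<forall>j < N - card (sinks N E). j \<noteq> i \<longrightarrow>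
            ((Re (aval N E i j) = 0 \<and> Im (aval N E i j) \<noteq> 0 \<and> adj E i j \<noteq> 0
                \<longrightarrow> char_entry (star_pt E i) (star_pt E j) = CM_One) \<and>
             ((Re (aval N E i j) \<noteq> 0 \<or>
               (Re (aval N E i j) = 0 \<and> Im (aval N E i j) \<noteq> 0 \<and> adj E i j = 0))
                \<longrightarrow> char_entry (star_pt E i) (star_pt E j) = CM_Zero) \<and>
             (aval N E i j = 0 \<longrightarrow> char_entry (star_pt E i) (star_pt E j) = CM_Empty)))"
proof -
  let ?M = "N - card (sinks N E)"
  have EN: "\<And>a b. (a, b) \<in> E \<Longrightarrow> a < N \<and> b < N \<and> a \<noteq> b"
    using simple unfolding simple_dgraph_def by auto
  have noloop: "\<forall>v. (v, v) \<notin> E" using EN by blast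
  have nonsink: "\<exists>u. (i, u) \<in> E" "i < N" if "i < ?M" for i
  proof -
    show "i < N" using that by simp
    then have "i \<notin> sinks N E" using sinks_last that by auto
    then show "\<exists>u. (i, u) \<in> E" using \<open>i < N\<close> by (auto simp: sinks_def)
  qed
  have pt: "pseudotree (star_pt E i)" if "i < ?M" for i
    using nonsink(1)[OF that] nonsink(2)[OF that] star_pseudotree[OF simple] by blast
  have diag: "char_entry (star_pt E i) (star_pt E i) = CM_Zero" if iM0: "i < ?M" for i
  proof -
    obtain u where "(i, u) \<in> E" using nonsink(1)[OF iM0] by blast
    then have "(i, u) \<in> snd (star_pt E i)" by (simp add: star_snd_mem)
    then have "\<not> disjoint_pt (star_pt E i) (star_pt E i)" unfolding disjoint_pt_def by blast
    then show ?thesis unfolding char_entry_def mergeable_def by (auto simp: star_fst)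
  qed
  have offdiag: "((Re (aval N E i j) = 0 \<and> Im (aval N E i j) \<noteq> 0 \<and> adj E i j \<noteq> 0
                \<longrightarrow> char_entry (star_pt E i) (star_pt E j) = CM_One) \<and>
             ((Re (aval N E i j) \<noteq> 0 \<or>
               (Re (aval N E i j) = 0 \<and> Im (aval N E i j) \<noteq> 0 \<and> adj E i j = 0))
                \<longrightarrow> char_entry (star_pt E i) (star_pt E j) = CM_Zero) \<and>
             (aval N E i j = 0 \<longrightarrow> char_entry (star_pt E i) (star_pt E j) = CM_Empty))"
    if iM: "i < ?M" and jM: "j < ?M" and ji: "j \<noteq> i" for i j
  proof -
    have iN: "i < N" and jN: "j < N" using iM jM by auto
    have ij: "i \<noteq> j" using ji by simp
    have Re0: "Re (aval N E i j) = 0 \<longleftrightarrow> \<not> (\<exists>w. (i, w) \<in> E \<and> (j, w) \<in> E)"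
    proof -
      have "Re (aval N E i j) = 0 \<longleftrightarrow> (\<forall>k\<in>{..<N}. adj E k i * adj E k j = 0)"
        unfolding aval_Re[OF ij] by (rule sum_nonneg_eq_0_iff) (auto simp: adj_def)
      also have "\<dots> \<longleftrightarrow> \<not> (\<exists>w. (i, w) \<in> E \<and> (j, w) \<in> E)"
        by (auto simp: adj_def dest: EN)
      finally show ?thesis .
    qed
    have Im0: "Im (aval N E i j) = 0 \<longleftrightarrow> (i, j) \<notin> E \<and> (j, i) \<notin> E"
      unfolding aval_Im[OF ij iN jN] by (auto simp: adj_def)
    have adj0: "adj E i j \<noteq> 0 \<longleftrightarrow> (j, i) \<in> E" by (simp add: adj_def)
    have a0: "aval N E i j = 0 \<longleftrightarrow> Re (aval N E i j) = 0 \<and> Im (aval N E i j) = 0"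
      by (simp add: complex_eq_iff)
    have inter: "fst (star_pt E j) \<inter> fst (star_pt E i) = {} \<longleftrightarrow>
        \<not> (\<exists>w. (i, w) \<in> E \<and> (j, w) \<in> E) \<and> (i, j) \<notin> E \<and> (j, i) \<notin> E"
      using ij by (auto simp: star_fst)
    let ?Ti = "star_pt E i" and ?Tj = "star_pt E j"
    have U_fst: "fst (graph_union ?Ti ?Tj) = {i} \<union> {v. (i, v) \<in> E} \<union> {j} \<union> {v. (j, v) \<in> E}"
      by (auto simp: graph_union_def star_fst)
    have U_snd: "(a, b) \<in> snd (graph_union ?Ti ?Tj) \<longleftrightarrow> (a = i \<and> (i, b) \<in> E) \<or> (a = j \<and> (j, b) \<in> E)"
      for a b by (auto simp: graph_union_def star_snd_mem)
    have U_fin: "finite (fst (graph_union ?Ti ?Tj))"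
      by (rule finite_subset[of _ "{0..<N}"]) (auto simp: U_fst iN jN dest: EN)
    show ?thesis
    proof (intro conjI impI)
      assume H: "Re (aval N E i j) = 0 \<and> Im (aval N E i j) \<noteq> 0 \<and> adj E i j \<noteq> 0"
      then have nc: "\<not> (\<exists>w. (i, w) \<in> E \<and> (j, w) \<in> E)" and e: "(j, i) \<in> E"
        using Re0 adj0 by auto
      have disj: "disjoint_pt ?Ti ?Tj"
        unfolding disjoint_pt_def using ij by (auto simp: star_pt_def)
      have ptU: "pseudotree (graph_union ?Ti ?Tj)"
      proof -
        have "simple_dgraph (graph_union ?Ti ?Tj)"
          unfolding simple_dgraph_def using U_fin
          by (auto simp: U_fst graph_union_def star_snd_mem star_fst dest: EN)
        moreover have "weakly_connected (graph_union ?Ti ?Tj)"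
        proof (rule wc_center[where c = j], intro ballI)
          fix v assume v: "v \<in> fst (graph_union ?Ti ?Tj)"
          let ?R = "snd (graph_union ?Ti ?Tj) \<union> (snd (graph_union ?Ti ?Tj))\<inverse>"
          have ji': "(j, i) \<in> ?R" using e U_snd by blast
          show "(j, v) \<in> ?R\<^sup>*"
          proof -
            consider "v = j" | "(j, v) \<in> E" | "v = i" | "(i, v) \<in> E" using v U_fst by auto
            then show ?thesis
            proof cases
              case 1 then show ?thesis by simp
            next
              case 2 then have "(j, v) \<in> ?R" using U_snd by blast
              then show ?thesis by blast
            next
              case 3 then show ?thesis using ji' by blast
            next
              case 4 then have "(i, v) \<in> ?R" using U_snd by blast
              then show ?thesis using ji' by (meson r_into_rtrancl rtrancl_into_rtrancl)
            qed
          qed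
        qed
        moreover have "card (fst (graph_union ?Ti ?Tj)) \<ge> 2"
        proof -
          have "{i, j} \<subseteq> fst (graph_union ?Ti ?Tj)" by (auto simp: U_fst)
          moreover have "card {i, j} = 2" using ij by auto
          ultimately show ?thesis using card_mono[OF U_fin] by metis
        qed
        moreover have "\<forall>v\<in>fst (graph_union ?Ti ?Tj). card {u. (u, v) \<in> snd (graph_union ?Ti ?Tj)} \<le> 1"
        proof
          fix v
          have "{u. (u, v) \<in> snd (graph_union ?Ti ?Tj)} \<subseteq> {if (i, v) \<in> E then i else j}"
            using nc by (auto simp: U_snd)
          then show "card {u. (u, v) \<in> snd (graph_union ?Ti ?Tj)} \<le> 1"
            by (metis card.empty card.insert empty_iff finite.intros(1)
              One_nat_def card_mono finite.emptyI finite_insert)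
        qed
        ultimately show ?thesis unfolding pseudotree_def by blast
      qed
      have paths: "\<forall>r\<in>roots ?Tj. \<forall>v\<in>fst ?Ti.
        \<exists>xs. dpath (snd (graph_union ?Ti ?Tj)) xs \<and> hd xs = r \<and> last xs = v"
      proof (intro ballI)
        fix r v assume r: "r \<in> roots ?Tj" and v: "v \<in> fst ?Ti"
        have rj: "r = j" using r roots_star_sub by blast
        consider "v = i" | "v = j" | "(i, v) \<in> E" "v \<noteq> j" using v by (auto simp: star_fst)
        then show "\<exists>xs. dpath (snd (graph_union ?Ti ?Tj)) xs \<and> hd xs = r \<and> last xs = v"
        proof cases
          case 1
          show ?thesis
            by (rule exI[where x = "[j, i]"]) (auto intro!: dpath2 simp: rj 1 U_snd e ji)
        next
          case 2
          show ?thesis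
            by (rule exI[where x = "[j]"]) (auto intro!: dpath1 simp: rj 2)
        next
          case 3
          have "v \<noteq> i" using 3 EN by blast
          then show ?thesis using 3
            by (intro exI[where x = "[j, i, v]"]) (auto intro!: dpath3 simp: rj ji U_snd e)
        qed
      qed
      have "fst ?Ti \<inter> fst ?Tj \<noteq> {}" using e by (auto simp: star_fst)
      then have "mergeable ?Ti ?Tj"
        unfolding mergeable_def using pt[OF iM] pt[OF jM] disj ptU paths by blast
      then show "char_entry ?Ti ?Tj = CM_One" by (simp add: char_entry_def)
    next
      assume H: "Re (aval N E i j) \<noteq> 0 \<or>
               (Re (aval N E i j) = 0 \<and> Im (aval N E i j) \<noteq> 0 \<and> adj E i j = 0)"
      have "\<not> mergeable ?Ti ?Tj \<and> fst ?Tj \<inter> fst ?Ti \<noteq> {}"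
      proof (cases "Re (aval N E i j) \<noteq> 0")
        case True
        then obtain w where w: "(i, w) \<in> E" "(j, w) \<in> E" using Re0 by blast
        have "{i, j} \<subseteq> {u. (u, w) \<in> snd (graph_union ?Ti ?Tj)}" using w by (auto simp: U_snd)
        moreover have "finite {u. (u, w) \<in> snd (graph_union ?Ti ?Tj)}"
          by (rule finite_subset[of _ "{0..<N}"]) (auto simp: U_snd iN jN)
        ultimately have "card {u. (u, w) \<in> snd (graph_union ?Ti ?Tj)} \<ge> 2"
          using ij by (metis card_2_iff card_mono)
        moreover have "w \<in> fst (graph_union ?Ti ?Tj)" using w by (auto simp: U_fst)
        ultimately have "\<not> pseudotree (graph_union ?Ti ?Tj)"
          unfolding pseudotree_def by fastforce
        then show ?thesis using w unfolding mergeable_def by (auto simp: star_fst)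
      next
        case False
        with H have e: "(i, j) \<in> E" and ne: "(j, i) \<notin> E" using Im0 adj0 by auto
        have jr: "j \<in> roots ?Tj" by (rule root_star[OF noloop])
        have iT: "i \<in> fst ?Ti" by (simp add: star_fst)
        have nopath: "\<not> (dpath (snd (graph_union ?Ti ?Tj)) xs \<and> hd xs = j \<and> last xs = i)" for xs
        proof
          assume P: "dpath (snd (graph_union ?Ti ?Tj)) xs \<and> hd xs = j \<and> last xs = i"
          let ?S = "{j} \<union> {v. (j, v) \<in> E}"
          have "(j, i) \<in> (snd (graph_union ?Ti ?Tj))\<^sup>*" using P dpath_rtrancl by metis
          then have "i \<in> ?S"
          proof (induction rule: rtrancl_induct)
            case base then show ?case by simp
          next
            case (step y z)
            then show ?case using ne ij by (auto simp: U_snd)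
          qed
          then show False using ne ij by auto
        qed
        have "\<not> mergeable ?Ti ?Tj" unfolding mergeable_def using jr iT nopath by blast
        then show ?thesis using e by (auto simp: star_fst)
      qed
      then show "char_entry ?Ti ?Tj = CM_Zero" by (simp add: char_entry_def)
    next
      assume "aval N E i j = 0"
      then have "fst ?Tj \<inter> fst ?Ti = {}" using a0 Re0 Im0 inter by auto
      then show "char_entry ?Ti ?Tj = CM_Empty"
        by (auto simp: char_entry_def mergeable_def)
    qed
  qed
  show ?thesis using diag offdiag by blast
qed

end
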